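(* Let $\mathbf H=\mathrm{diag}(H_1,\dots,H_n)$ with $H_i$ i.i.d. having a regular fading distribution, fix a realization $\mathbf H$, and let $S_{\mathbf H}=\mathbf HS$ be the received IC of an IC $S\subset\mathbb R^n$, with density $\gamma_{rc}(\mathbf H)$ and average error probability $P_e(S_{\mathbf H})=\epsilon(\mathbf H)$ (both as defined in the context). For any $\xi>0$, if $\mathbf H$ is not a $\xi$-strong fading realization, then there exists a regular IC $S'_{\mathbf H}$ with density $\gamma'_{rc}(\mathbf H)\ge\gamma_{rc}(\mathbf H)/(1+\xi)$ and average error probability $P_e(S'_{\mathbf H})\le\epsilon(\mathbf H)(1+\xi)$.
   Context: Regular fading distribution: PDF $f$ with $f(h)\propto h^{\alpha-1}$ for all small $h>0$, some $\alpha>0$. Noise $\mathbf z\sim N(0,\sigma^2I_n)$. For the received IC: $\mathrm{Cb}(a)=\{\mathbf x\in\mathbb R^n:|x_i|<a/2\}$, $M(S_{\mathbf H},a)=|S_{\mathbf H}\cap\mathbf H\mathrm{Cb}(a)|$, $\gamma_{rc}(\mathbf H)=\limsup_{a\to\infty}\frac{M(S_{\mathbf H},a)}{\mathrm{Vol}(\mathbf H\mathrm{Cb}(a))}$, and $P_e(S_{\mathbf H})=\limsup_{a\to\infty}\frac1{M(S_{\mathbf H},a)}\sum_{s\in S_{\mathbf H}\cap\mathbf H\mathrm{Cb}(a)}\Pr\{s+\mathbf z\notin W(s)\}$, with $W(s)$ the Voronoi cell of $s$ in $S_{\mathbf H}$; the same definitions apply to $S'_{\mathbf H}$. An IC $T$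 is regular if there is $r_0>0$ such that every Voronoi cell $W(s)$, $s\in T$, is contained in $\{\mathbf x:\|\mathbf x-s\|<r_0\}$. For $\xi>0$ let $h^*_{\min}(\xi)$ solve $\Pr\{\min(H_1,\dots,H_n)\le h^*_{\min}\}=\xi$; a realization $\mathbf H=\mathrm{diag}(h_1,\dots,h_n)$ is $\xi$-strong if $\min(h_1,\dots,h_n)\le h^*_{\min}(\xi)$. *)

theory Defs
  imports "HOL-Probability.Probability"
begin

text \<open>Points of R^n are vectors of type real^'n (n = CARD('n)).
  A diagonal channel matrix H = diag(h_1,...,h_n) is represented by the vector h of its
  diagonal entries; Hmap h x = H x.\<close>

definition Hmap :: "real^'n \<Rightarrow> real^'n \<Rightarrow> real^'n" where
  "Hmap h x = (\<chi> i. h $ i * x $ i)"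

definition IC :: "(real^'n) set \<Rightarrow> bool" where
  "IC S \<longleftrightarrow> countable S \<and> (\<forall>B. bounded B \<longrightarrow> finite (S \<inter> B))"

definition Cb :: "real \<Rightarrow> (real^'n) set" where
  "Cb a = {x. \<forall>i. \<bar>x $ i\<bar> < a / 2}"

definition M_count :: "(real^'n) set \<Rightarrow> real^'n \<Rightarrow> real \<Rightarrow> nat" where
  "M_count S h a = card (S \<inter> Hmap h ` Cb a)"

definition density_rc :: "(real^'n) set \<Rightarrow> real^'n \<Rightarrow> ereal" where
  "density_rc S h =
     Limsup at_top (\<lambda>a::real. ereal (real (M_count S h a) / measure lborel (Hmap h ` Cb a)))"

definition voronoi :: "(real^'n) set \<Rightarrow> real^'n \<Rightarrow> (real^'n) set" where
  "voronoi S s = {x. \<forall>t\<in>S. dist x s \<le> dist x t}"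

definition gauss_noise :: "real \<Rightarrow> (real^'n) measure" where
  "gauss_noise \<sigma> = density lborel
     (\<lambda>z::real^'n. ennreal ((2 * pi * \<sigma>\<^sup>2) powr (- real CARD('n) / 2)
                              * exp (- (norm z)\<^sup>2 / (2 * \<sigma>\<^sup>2))))"

definition err_prob :: "real \<Rightarrow> (real^'n) set \<Rightarrow> real^'n \<Rightarrow> real" where
  "err_prob \<sigma> S s = measure (gauss_noise \<sigma>) {z. s + z \<notin> voronoi S s}"

definition avg_err :: "real \<Rightarrow> (real^'n) set \<Rightarrow> real^'n \<Rightarrow> ereal" where
  "avg_err \<sigma> S h =
     Limsup at_top (\<lambda>a::real. ereal ((\<Sum>s\<in>S \<inter> Hmap h ` Cb a. err_prob \<sigma> S s)
                                      / real (M_count S h a)))"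

definition regular_IC :: "(real^'n) set \<Rightarrow> bool" where
  "regular_IC T \<longleftrightarrow> (\<exists>r0>0. \<forall>s\<in>T. voronoi T s \<subseteq> ball s r0)"

definition regular_fading_pdf :: "(real \<Rightarrow> real) \<Rightarrow> bool" where
  "regular_fading_pdf f \<longleftrightarrow>
     f \<in> borel_measurable borel \<and> (\<forall>x. 0 \<le> f x) \<and> (\<forall>x\<le>0. f x = 0) \<and>
     (\<integral>\<^sup>+ x. ennreal (f x) \<partial>lborel) = 1 \<and>
     (\<exists>\<alpha>>0. \<exists>c>0. \<exists>\<delta>>0. \<forall>x. 0 < x \<and> x < \<delta> \<longrightarrow> f x = c * x powr (\<alpha> - 1))"

definition fading_law :: "(real \<Rightarrow> real) \<Rightarrow> ('n::finite \<Rightarrow> real) measure" where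
  "fading_law f = (\<Pi>\<^sub>M i\<in>(UNIV::'n set). density lborel (\<lambda>x. ennreal (f x)))"

definition hmin :: "real^'n \<Rightarrow> real" where
  "hmin h = Min (range (\<lambda>i. h $ i))"

definition is_hstar :: "(real \<Rightarrow> real) \<Rightarrow> ('n::finite) itself \<Rightarrow> real \<Rightarrow> real \<Rightarrow> bool" where
  "is_hstar f _ \<xi> t \<longleftrightarrow>
     measure (fading_law f :: ('n::finite \<Rightarrow> real) measure) {H. Min (range H) \<le> t} = \<xi>"

text \<open>h is a xi-strong fading realization (w.r.t. the threshold t = h*_min(xi))\<close>
definition xi_strong :: "real \<Rightarrow> real^'n \<Rightarrow> bool" where
  "xi_strong t h \<longleftrightarrow> hmin h \<le> t"

end

theory Submission
  imports Defs
begin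

lemma gauss_1d_finite:
  assumes "\<sigma> > 0"
  shows "(\<integral>\<^sup>+ x. ennreal (exp (- x\<^sup>2 / (2 * \<sigma>\<^sup>2))) \<partial>lborel) < \<infinity>"
proof -
  have eq: "exp (- x\<^sup>2 / (2 * \<sigma>\<^sup>2)) = sqrt (2 * pi * \<sigma>\<^sup>2) * normal_density 0 \<sigma> x" for x
    using assms by (simp add: normal_density_def)
  have "(\<integral>\<^sup>+ x. ennreal (normal_density 0 \<sigma> x) \<partial>lborel) = 1"
    using prob_space.emeasure_space_1[OF prob_space_normal_density[where \<mu>=0, OF assms]]
    by (simp add: emeasure_density)
  hence H: "(\<integral>\<^sup>+ x. ennreal (sqrt (2 * pi * \<sigma>\<^sup>2)) * ennreal (normal_density 0 \<sigma> x) \<partial>lborel) = ennreal (sqrt (2 * pi * \<sigma>\<^sup>2))"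
    by (subst nn_integral_cmult) auto
  have e2: "\<And>x. ennreal (exp (- x\<^sup>2 / (2 * \<sigma>\<^sup>2))) = ennreal (sqrt (2*pi*\<sigma>\<^sup>2)) * ennreal (normal_density 0 \<sigma> x)"
    by (subst eq) (simp add: ennreal_mult normal_density_nonneg)
  show ?thesis by (simp only: e2 H) simp
qed

lemma gauss_noise_finite:
  assumes "\<sigma> > 0"
  shows "finite_measure (gauss_noise \<sigma> :: (real^'n) measure)"
proof -
  define c where "c = (2 * pi * \<sigma>\<^sup>2) powr (- real CARD('n) / 2)"
  have prod: "exp (- (norm z)\<^sup>2 / (2 * \<sigma>\<^sup>2)) = (\<Prod>b\<in>Basis. exp (- (z \<bullet> b)\<^sup>2 / (2 * \<sigma>\<^sup>2)))" for z :: "real^'n"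
  proof -
    have "(norm z)\<^sup>2 = (\<Sum>b\<in>Basis. (z \<bullet> b)\<^sup>2)"
      by (simp only: power2_norm_eq_inner euclidean_inner[of z z]) (simp add: power2_eq_square)
    hence "- (norm z)\<^sup>2 / (2 * \<sigma>\<^sup>2) = (\<Sum>b\<in>Basis. - (z \<bullet> b)\<^sup>2 / (2 * \<sigma>\<^sup>2))"
      by (simp add: sum_divide_distrib[symmetric] sum_negf)
    thus ?thesis by (simp add: exp_sum)
  qed
  have "(\<integral>\<^sup>+ z. ennreal (exp (- (norm z)\<^sup>2 / (2 * \<sigma>\<^sup>2))) \<partial>(lborel :: (real^'n) measure))
      = (\<integral>\<^sup>+ z. (\<Prod>b\<in>(Basis :: (real^'n) set). ennreal (exp (- (z \<bullet> b)\<^sup>2 / (2 * \<sigma>\<^sup>2)))) \<partial>lborel)"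
    by (intro nn_integral_cong, simp only: prod, rule prod_ennreal[symmetric]) simp
  also have "\<dots> = (\<Prod>b\<in>(Basis :: (real^'n) set). (\<integral>\<^sup>+ x. ennreal (exp (- x\<^sup>2 / (2 * \<sigma>\<^sup>2))) \<partial>lborel))"
    by (rule nn_integral_lborel_prod) auto
  also have "\<dots> < \<infinity>"
    using gauss_1d_finite[OF assms] by (simp add: less_top ennreal_prod_eq_top power_less_top_ennreal)
  finally have fin: "(\<integral>\<^sup>+ z. ennreal (exp (- (norm z)\<^sup>2 / (2 * \<sigma>\<^sup>2))) \<partial>(lborel :: (real^'n) measure)) < \<infinity>" .
  have "emeasure (gauss_noise \<sigma> :: (real^'n) measure) UNIV
      = (\<integral>\<^sup>+ z. ennreal c * ennreal (exp (- (norm z)\<^sup>2 / (2 * \<sigma>\<^sup>2))) \<partial>(lborel :: (real^'n) measure))"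
    unfolding gauss_noise_def c_def
    by (subst emeasure_density) (auto simp: ennreal_mult'' intro!: nn_integral_cong)
  also have "\<dots> = ennreal c * (\<integral>\<^sup>+ z. ennreal (exp (- (norm z)\<^sup>2 / (2 * \<sigma>\<^sup>2))) \<partial>(lborel :: (real^'n) measure))"
    by (rule nn_integral_cmult) auto
  also have "\<dots> < \<infinity>" using fin by (simp add: ennreal_mult_less_top)
  finally show ?thesis
    by (intro finite_measureI) (simp add: gauss_noise_def space_density)
qed

lemma sets_gauss[simp, measurable_cong]: "sets (gauss_noise \<sigma>) = sets borel"
  by (simp add: gauss_noise_def)

lemma gauss_tail:
  assumes "\<sigma> > 0" "e > 0"
  shows "\<exists>D>0. measure (gauss_noise \<sigma> :: (real^'n) measure) {z. D \<le> norm z} \<le> e"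
proof -
  interpret finite_measure "gauss_noise \<sigma> :: (real^'n) measure" by (rule gauss_noise_finite[OF assms(1)])
  define A where "A n = {z::real^'n. real (Suc n) \<le> norm z}" for n
  have "decseq A" unfolding A_def by (auto simp: decseq_def)
  moreover have "A n \<in> sets (gauss_noise \<sigma>)" for n unfolding A_def by simp
  ultimately have "(\<lambda>n. measure (gauss_noise \<sigma>) (A n)) \<longlonglongrightarrow> measure (gauss_noise \<sigma>) (\<Inter>n. A n)"
    by (intro finite_Lim_measure_decseq) auto
  moreover have "(\<Inter>n. A n) = {}"
  proof safe
    fix z assume "z \<in> (\<Inter>n. A n)"
    then have "real (Suc (nat \<lceil>norm z\<rceil>)) \<le> norm z" unfolding A_def by blast
    thus "z \<in> {}" by linarith
  qed
  ultimately have "(\<lambda>n. measure (gauss_noise \<sigma>) (A n)) \<longlonglongrightarrow> 0" by simp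
  then obtain N where "\<And>n. n \<ge> N \<Longrightarrow> measure (gauss_noise \<sigma>) (A n) < e"
    using assms(2) by (metis (no_types, lifting) eventually_sequentially order_tendstoD(2))
  hence "measure (gauss_noise \<sigma>) (A N) \<le> e" by fastforce
  thus ?thesis unfolding A_def by (intro exI[of _ "real (Suc N)"]) auto
qed

lemma gauss_lower:
  fixes A :: "(real^'n) set"
  assumes s: "\<sigma> > 0" and A: "A \<in> sets borel" and R: "\<And>z. z \<in> A \<Longrightarrow> norm z \<le> R"
  shows "emeasure (gauss_noise \<sigma>) A \<ge>
    ennreal ((2 * pi * \<sigma>\<^sup>2) powr (- real CARD('n) / 2) * exp (- R\<^sup>2 / (2 * \<sigma>\<^sup>2))) * emeasure lborel A"
proof -
  let ?c = "(2 * pi * \<sigma>\<^sup>2) powr (- real CARD('n) / 2)"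
  have "ennreal (?c * exp (- R\<^sup>2 / (2 * \<sigma>\<^sup>2))) * emeasure lborel A
      = (\<integral>\<^sup>+ z. ennreal (?c * exp (- R\<^sup>2 / (2 * \<sigma>\<^sup>2))) * indicator A z \<partial>lborel)"
    using A by (simp add: nn_integral_cmult_indicator)
  also have "\<dots> \<le> (\<integral>\<^sup>+ z. ennreal (?c * exp (- (norm z)\<^sup>2 / (2 * \<sigma>\<^sup>2))) * indicator A z \<partial>lborel)"
  proof (intro nn_integral_mono)
    fix z show "ennreal (?c * exp (- R\<^sup>2 / (2 * \<sigma>\<^sup>2))) * indicator A z
        \<le> ennreal (?c * exp (- (norm z)\<^sup>2 / (2 * \<sigma>\<^sup>2))) * indicator A z"
    proof (cases "z \<in> A")
      case True
      hence "norm z \<le> R" by (rule R)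
      hence "(norm z)\<^sup>2 \<le> R\<^sup>2" by (simp add: power_mono)
      hence "- R\<^sup>2 / (2 * \<sigma>\<^sup>2) \<le> - (norm z)\<^sup>2 / (2 * \<sigma>\<^sup>2)" using s
        by (simp add: divide_right_mono)
      hence "?c * exp (- R\<^sup>2 / (2 * \<sigma>\<^sup>2)) \<le> ?c * exp (- (norm z)\<^sup>2 / (2 * \<sigma>\<^sup>2))"
        by (intro mult_left_mono) auto
      thus ?thesis using True by (simp add: ennreal_leI)
    qed simp
  qed
  also have "\<dots> = emeasure (gauss_noise \<sigma>) A"
    unfolding gauss_noise_def using A by (simp add: emeasure_density)
  finally show ?thesis .
qed

lemma Hmap_nth[simp]: "Hmap h x $ i = h $ i * x $ i"
  by (simp add: Hmap_def)

lemma linear_Hmap: "linear (Hmap h)"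
  by (intro linearI) (auto simp: vec_eq_iff algebra_simps)

lemma Hmap_inv: "(\<And>i. h $ i \<noteq> 0) \<Longrightarrow> Hmap h (Hmap (\<chi> i. 1 / h $ i) y) = y"
  by (simp add: vec_eq_iff)

lemma Cb_bounded: "bounded (Cb a :: (real^'n) set)"
proof -
  have "Cb a \<subseteq> cbox ((\<chi> i. - \<bar>a\<bar>/2)::real^'n) (\<chi> i. \<bar>a\<bar>/2)"
  proof
    fix x :: "real^'n" assume x: "x \<in> Cb a"
    have "- (\<bar>a\<bar>/2) \<le> x $ i \<and> x $ i \<le> \<bar>a\<bar>/2" for i
    proof -
      have "\<bar>x $ i\<bar> < a/2" using x by (simp add: Cb_def)
      thus ?thesis by arith
    qed
    thus "x \<in> cbox ((\<chi> i. - \<bar>a\<bar>/2)::real^'n) (\<chi> i. \<bar>a\<bar>/2)" by (simp add: mem_box_cart)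
  qed
  thus ?thesis using bounded_cbox bounded_subset by blast
qed

lemma window_bounded: "bounded (Hmap h ` Cb a :: (real^'n) set)"
  by (rule bounded_linear_image[OF Cb_bounded]) (rule linear_conv_bounded_linear[THEN iffD1, OF linear_Hmap])

lemma window_eq:
  fixes h :: "real^'n"
  assumes "\<And>i. h $ i > 0"
  shows "Hmap h ` Cb a = {y. \<forall>i. \<bar>y $ i\<bar> < h $ i * a / 2}"
proof safe
  fix x :: "real^'n" and i assume "x \<in> Cb a"
  hence "\<bar>x $ i\<bar> < a / 2" by (simp add: Cb_def)
  thus "\<bar>Hmap h x $ i\<bar> < h $ i * a / 2" using assms[of i]
    by (simp add: abs_mult)
next
  fix y assume y: "\<forall>i. \<bar>y $ i\<bar> < h $ i * a / 2"
  have hn: "\<And>i. h $ i \<noteq> 0" using assms by (metis less_irrefl)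
  have "Hmap (\<chi> i. 1 / h $ i) y \<in> Cb a"
  proof -
    have "\<bar>y $ i / h $ i\<bar> < a / 2" for i
    proof -
      have y1: "\<bar>y $ i\<bar> < h $ i * a / 2" using y by blast
      have hp: "h $ i > 0" by (rule assms)
      have "\<bar>y $ i / h $ i\<bar> = \<bar>y $ i\<bar> / h $ i" using hp by simp
      also have "\<dots> < a / 2" using y1 hp by (simp add: pos_divide_less_eq mult.commute)
      finally show ?thesis .
    qed
    thus ?thesis by (simp add: Cb_def)
  qed
  thus "y \<in> Hmap h ` Cb a" using Hmap_inv[OF hn] by (metis image_eqI)
qed

lemma box_sym_eq: "{y::real^'n. \<forall>i. \<bar>y $ i\<bar> < v $ i} = box (-v) v"
proof safe
  fix y :: "real^'n" assume A: "\<forall>i. \<bar>y $ i\<bar> < v $ i"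
  have "- v $ i < y $ i \<and> y $ i < v $ i" for i
  proof -
    have "\<bar>y $ i\<bar> < v $ i" using A by blast
    thus ?thesis by arith
  qed
  thus "y \<in> box (-v) v" by (simp add: mem_box_cart)
next
  fix y :: "real^'n" and i assume "y \<in> box (-v) v"
  hence "- v $ i < y $ i \<and> y $ i < v $ i" by (simp add: mem_box_cart)
  thus "\<bar>y $ i\<bar> < v $ i" by (simp add: abs_less_iff)
qed

lemma window_box:
  fixes h :: "real^'n"
  assumes "\<And>i. h $ i > 0"
  shows "Hmap h ` Cb a = box (-(\<chi> i. h $ i * a / 2)) (\<chi> i. h $ i * a / 2)"
  using box_sym_eq[of "\<chi> i. h $ i * a / 2"] unfolding window_eq[OF assms] by simp

lemma vol_window:
  fixes h :: "real^'n"
  assumes h: "\<And>i. h $ i > 0" and a: "a > 0"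
  shows "measure lborel (Hmap h ` Cb a) = (\<Prod>i\<in>UNIV. h $ i) * a ^ CARD('n::finite)"
proof -
  have "measure lborel (Hmap h ` Cb a) = measure lborel (cbox (-(\<chi> i. h $ i * a / 2)) (\<chi> i. h $ i * a / 2))"
    unfolding window_box[OF h] by (simp only: measure_lborel_box_eq measure_lborel_cbox_eq)
  also have "\<dots> = (\<Prod>i\<in>UNIV. h $ i * a)"
  proof (subst content_cbox_cart)
    show "cbox (-(\<chi> i. h $ i * a / 2)) (\<chi> i. h $ i * a / 2 :: real^'n) \<noteq> {}"
    proof -
      have "0 \<le> h $ i * a / 2" for i using h[of i] a by simp
      hence "-(\<chi> i. h $ i * a / 2) \<in> cbox (-(\<chi> i. h $ i * a / 2)) (\<chi> i. h $ i * a / 2 :: real^'n)"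
        by (simp add: mem_box_cart)
      thus ?thesis by blast
    qed
  qed (simp add: mult.commute)
  also have "\<dots> = (\<Prod>i\<in>UNIV. h $ i) * a ^ CARD('n)"
    by (simp add: prod.distrib)
  finally show ?thesis .
qed

lemma voronoi_closed: "closed (voronoi S s)"
proof -
  have "voronoi S s = (\<Inter>t\<in>S. {x. dist x s \<le> dist x t})"
    by (auto simp: voronoi_def)
  thus ?thesis by (auto intro!: closed_INT closed_Collect_le continuous_intros)
qed

lemma err_set_sets: "{z. s + z \<notin> voronoi S s} \<in> sets borel"
proof -
  have "closed ((\<lambda>z. s + z) -` voronoi S s)"
    using voronoi_closed[of S s]
    by (intro continuous_closed_vimage) (auto intro: continuous_intros)
  moreover have "{z. s + z \<notin> voronoi S s} = - ((\<lambda>z. s + z) -` voronoi S s)" by auto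
  ultimately have "open {z. s + z \<notin> voronoi S s}"
    by (simp add: open_Compl)
  thus ?thesis by simp
qed

lemma IC_image:
  fixes h :: "real^'n"
  assumes "IC S" and hn: "\<And>i. h $ i \<noteq> 0"
  shows "IC (Hmap h ` S)"
  unfolding IC_def
proof safe
  show "countable (Hmap h ` S)" using assms(1) by (simp add: IC_def)
next
  fix B :: "(real^'n) set" assume B: "bounded B"
  let ?g = "Hmap (\<chi> i. 1 / h $ i)"
  have "bounded (?g ` B)"
    by (rule bounded_linear_image[OF B]) (rule linear_conv_bounded_linear[THEN iffD1, OF linear_Hmap])
  hence "finite (S \<inter> ?g ` B)" using assms(1) by (simp add: IC_def)
  moreover have "Hmap h ` S \<inter> B \<subseteq> Hmap h ` (S \<inter> ?g ` B)"
  proof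
    fix y assume "y \<in> Hmap h ` S \<inter> B"
    then obtain x where x: "x \<in> S" "y = Hmap h x" "y \<in> B" by auto
    have "?g y = x" using x(2) hn by (simp add: vec_eq_iff)
    thus "y \<in> Hmap h ` (S \<inter> ?g ` B)" using x by (metis IntI image_eqI)
  qed
  ultimately show "finite (Hmap h ` S \<inter> B)" by (meson finite_imageI finite_subset)
qed

definition kap :: "real \<Rightarrow> real \<Rightarrow> 'n::finite itself \<Rightarrow> real" where
  "kap \<sigma> d0 _ = (2 * pi * \<sigma>\<^sup>2) powr (- real CARD('n) / 2) * exp (- (2*d0)\<^sup>2 / (2 * \<sigma>\<^sup>2))
      * (d0 / (2 * real CARD('n))) ^ CARD('n)"

lemma kap_pos: "d0 > 0 \<Longrightarrow> \<sigma> > 0 \<Longrightarrow> kap \<sigma> d0 TYPE('n::finite) > 0"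
  by (simp add: kap_def)

lemma l1_sum_le: "(\<And>i. \<bar>x $ i\<bar> \<le> r) \<Longrightarrow> norm (x::real^'n) \<le> real CARD('n) * r"
proof -
  assume "\<And>i. \<bar>x $ i\<bar> \<le> r"
  hence "sum (\<lambda>i. \<bar>x $ i\<bar>) UNIV \<le> sum (\<lambda>i. r) (UNIV::'n set)" by (intro sum_mono) auto
  thus ?thesis using norm_le_l1_cart[of x] by simp
qed

lemma err_lower:
  fixes S :: "(real^'n) set"
  assumes s: "\<sigma> > 0" and st: "s \<in> S" "t \<in> S" "t \<noteq> s" and d: "dist s t \<le> d0" and d0: "d0 > 0"
  shows "err_prob \<sigma> S s \<ge> kap \<sigma> d0 TYPE('n)"
proof -
  interpret finite_measure "gauss_noise \<sigma> :: (real^'n) measure" by (rule gauss_noise_finite[OF s])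
  define v where "v = t - s"
  define d where "d = norm v"
  have dpos: "d > 0" using st by (simp add: d_def v_def)
  have dle: "d \<le> d0" using d by (simp add: d_def v_def dist_norm norm_minus_commute)
  define w where "w = (d0 / d) *\<^sub>R v"
  define n where "n = real CARD('n)"
  have n1: "n \<ge> 1" by (simp add: n_def)
  define r where "r = d0 / (4 * n)"
  have rpos: "r > 0" using d0 n1 by (simp add: r_def)
  define C where "C = cbox (w - (\<chi> i. r)) (w + (\<chi> i. r))"
  have wn: "norm w = d0" using dpos d0 by (simp add: w_def d_def)
  have wv: "w \<bullet> v = d0 * d" using dpos by (simp add: w_def d_def power2_eq_square dot_square_norm)
  have Cnorm: "norm (z - w) \<le> d0 / 4" if "z \<in> C" for z
  proof -
    have "\<bar>(z - w) $ i\<bar> \<le> r" for i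
    proof -
      have "w $ i - r \<le> z $ i \<and> z $ i \<le> w $ i + r" using that by (simp add: C_def mem_box_cart)
      thus ?thesis by (simp add: abs_le_iff)
    qed
    hence "norm (z - w) \<le> n * r" using l1_sum_le[of "z - w" r] by (simp add: n_def)
    thus ?thesis using n1 by (simp add: r_def)
  qed
  have Csub: "C \<subseteq> {z. s + z \<notin> voronoi S s}"
  proof
    fix z assume z: "z \<in> C"
    have "\<bar>(z - w) \<bullet> v\<bar> \<le> norm (z - w) * norm v" by (rule Cauchy_Schwarz_ineq2)
    moreover have "norm (z - w) * norm v \<le> (d0 / 4) * d"
      unfolding d_def by (rule mult_right_mono[OF Cnorm[OF z]]) simp
    ultimately have "\<bar>(z - w) \<bullet> v\<bar> \<le> (d0 / 4) * d" by linarith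
    hence "(z - w) \<bullet> v \<ge> - (d0 / 4) * d" by linarith
    hence zv: "z \<bullet> v \<ge> 3 * d0 * d / 4" using wv by (simp add: inner_diff_left algebra_simps)
    have "(norm (z - v))\<^sup>2 = (norm z)\<^sup>2 - 2 * (z \<bullet> v) + d\<^sup>2"
      by (simp add: d_def power2_norm_eq_inner inner_diff_left inner_diff_right inner_commute)
    also have "\<dots> < (norm z)\<^sup>2"
    proof -
      have "d * d \<le> d0 * d" using dle dpos by (simp add: mult_right_mono)
      moreover have "d * d > 0" using dpos by simp
      ultimately show ?thesis using zv unfolding power2_eq_square by linarith
    qed
    finally have "norm (z - v) < norm z" by (simp add: power_less_imp_less_base)
    hence "\<not> dist (s + z) s \<le> dist (s + z) t" by (simp add: dist_norm v_def algebra_simps)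
    thus "z \<in> {z. s + z \<notin> voronoi S s}" using st(2) by (auto simp: voronoi_def)
  qed
  have Cbound: "norm z \<le> 2 * d0" if "z \<in> C" for z
  proof -
    have "norm z \<le> norm w + norm (z - w)" by (metis add.commute diff_add_cancel norm_triangle_ineq)
    thus ?thesis using Cnorm[OF that] wn d0 by simp
  qed
  have volC: "emeasure lborel C = ennreal ((d0 / (2 * n)) ^ CARD('n))"
  proof -
    have "emeasure lborel C = (\<Prod>b\<in>(Basis::(real^'n) set). ((w + (\<chi> i. r)) - (w - (\<chi> i. r))) \<bullet> b)"
      unfolding C_def using rpos
      by (intro emeasure_lborel_cbox) (auto simp: Basis_vec_def inner_axis inner_diff_left inner_add_left)
    also have "\<dots> = (\<Prod>b\<in>(Basis::(real^'n) set). 2 * r)"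
      by (intro arg_cong[where f=ennreal] prod.cong refl) (auto simp: Basis_vec_def cart_eq_inner_axis[symmetric])
    also have "\<dots> = ennreal ((d0 / (2 * n)) ^ CARD('n))"
      using rpos by (simp add: r_def)
    finally show ?thesis .
  qed
  have Cs: "C \<in> sets borel" by (simp add: C_def)
  have "ennreal (kap \<sigma> d0 TYPE('n)) \<le> emeasure (gauss_noise \<sigma>) C"
    using gauss_lower[OF s Cs Cbound] volC d0 s
    by (simp add: kap_def n_def ennreal_mult'' mult.assoc)
  also have "\<dots> \<le> emeasure (gauss_noise \<sigma>) {z. s + z \<notin> voronoi S s}"
    using Csub err_set_sets by (intro emeasure_mono) auto
  also have "\<dots> = ennreal (err_prob \<sigma> S s)"
    unfolding err_prob_def using err_set_sets by (simp add: emeasure_eq_measure)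
  finally show ?thesis by (metis ennreal_le_iff err_prob_def measure_nonneg)
qed

lemma pigeon:
  fixes F :: "(real^'n) set" and h :: "real^'n"
  assumes fin: "finite F" and l: "ell > 0" and apos: "a > 0" and h: "\<And>i. h $ i > 0"
    and sub: "\<And>s i. s \<in> F \<Longrightarrow> \<bar>s $ i\<bar> < h $ i * a / 2"
  shows "real (card {s\<in>F. \<not> (\<exists>t\<in>F. t \<noteq> s \<and> dist s t \<le> real CARD('n) * ell)})
           \<le> (\<Prod>i\<in>UNIV. h $ i * a / ell + 3)"
proof -
  let ?L = "{s\<in>F. \<not> (\<exists>t\<in>F. t \<noteq> s \<and> dist s t \<le> real CARD('n) * ell)}"
  define g where "g s = (\<lambda>i. \<lfloor>s $ i / ell\<rfloor>)" for s :: "real^'n"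
  define N where "N i = \<lceil>h $ i * a / (2 * ell)\<rceil>" for i
  have inj: "inj_on g ?L"
  proof (rule inj_onI)
    fix s t assume s: "s \<in> ?L" and t: "t \<in> ?L" and gst: "g s = g t"
    have "\<bar>(s - t) $ i\<bar> \<le> ell" for i
    proof -
      have "\<lfloor>s $ i / ell\<rfloor> = \<lfloor>t $ i / ell\<rfloor>" using fun_cong[OF gst, of i] unfolding g_def by simp
      hence "of_int \<lfloor>t $ i / ell\<rfloor> \<le> s $ i / ell \<and> s $ i / ell < of_int \<lfloor>t $ i / ell\<rfloor> + 1"
        by (simp only: floor_eq_iff)
      moreover have "of_int \<lfloor>t $ i / ell\<rfloor> \<le> t $ i / ell" "t $ i / ell < of_int \<lfloor>t $ i / ell\<rfloor> + 1"
        by (rule of_int_floor_le, rule real_of_int_floor_add_one_gt)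
      ultimately have "\<bar>s $ i / ell - t $ i / ell\<bar> < 1" by (simp only: abs_less_iff) linarith
      hence "\<bar>(s $ i - t $ i) / ell\<bar> < 1" by (simp add: diff_divide_distrib)
      hence "\<bar>s $ i - t $ i\<bar> / ell < 1" using l by (simp only: abs_divide abs_of_pos)
      hence "\<bar>s $ i - t $ i\<bar> < 1 * ell" by (simp only: pos_divide_less_eq[OF l])
      hence "\<bar>s $ i - t $ i\<bar> < ell" by simp
      thus ?thesis by simp
    qed
    hence "dist s t \<le> real CARD('n) * ell" using l1_sum_le[of "s - t" ell] by (simp add: dist_norm)
    thus "s = t" using s t by (auto simp: dist_commute)
  qed
  have img: "g ` ?L \<subseteq> PiE UNIV (\<lambda>i. {- N i .. N i})"
  proof
    fix k assume "k \<in> g ` ?L"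
    then obtain s where s: "s \<in> F" and k: "k = g s" by auto
    have "k i \<in> {- N i .. N i}" for i
    proof -
      have "\<bar>s $ i\<bar> < h $ i * a / 2" by (rule sub[OF s])
      hence "\<bar>s $ i\<bar> / ell < h $ i * a / 2 / ell" using l by (intro divide_strict_right_mono)
      hence "\<bar>s $ i / ell\<bar> < h $ i * a / (2 * ell)" using l by simp
      moreover have "h $ i * a / (2 * ell) \<le> of_int (N i)" unfolding N_def by (rule le_of_int_ceiling)
      ultimately have A: "s $ i / ell < of_int (N i)" "- of_int (N i) < s $ i / ell" by (simp_all only: abs_less_iff) linarith+
      have B: "of_int \<lfloor>s $ i / ell\<rfloor> \<le> s $ i / ell" "s $ i / ell < of_int \<lfloor>s $ i / ell\<rfloor> + 1"
        by (rule of_int_floor_le, rule real_of_int_floor_add_one_gt)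
      have "of_int \<lfloor>s $ i / ell\<rfloor> < (of_int (N i) :: real)" "(of_int (- N i - 1) :: real) < of_int \<lfloor>s $ i / ell\<rfloor>"
        using A B by linarith+
      hence "\<lfloor>s $ i / ell\<rfloor> < N i" "- N i - 1 < \<lfloor>s $ i / ell\<rfloor>" by (simp_all only: of_int_less_iff)
      hence "\<lfloor>s $ i / ell\<rfloor> \<in> {- N i .. N i}" by simp
      thus ?thesis unfolding k g_def by simp
    qed
    thus "k \<in> PiE UNIV (\<lambda>i. {- N i .. N i})" by auto
  qed
  have "card ?L = card (g ` ?L)" using inj by (simp add: card_image)
  also have "\<dots> \<le> card (PiE UNIV (\<lambda>i. {- N i .. N i}))"
    by (rule card_mono[OF _ img]) (simp add: finite_PiE)
  also have "\<dots> = (\<Prod>i\<in>UNIV. nat (2 * N i + 1))"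
    by (simp add: card_PiE)
  finally have "real (card ?L) \<le> real (\<Prod>i\<in>UNIV. nat (2 * N i + 1))" by linarith
  also have "\<dots> = (\<Prod>i\<in>UNIV. real (nat (2 * N i + 1)))" by simp
  also have "\<dots> \<le> (\<Prod>i\<in>UNIV. h $ i * a / ell + 3)"
  proof (rule prod_mono, safe)
    fix i
    have "real_of_int (N i) < h $ i * a / (2 * ell) + 1" unfolding N_def by linarith
    moreover have "real_of_int (N i) \<ge> h $ i * a / (2 * ell)" unfolding N_def by linarith
    moreover have "h $ i * a / (2 * ell) * 2 = h $ i * a / ell" using l by simp
    moreover have "h $ i * a / (2 * ell) > 0" using h[of i] apos l by simp
    ultimately have N0: "real_of_int (N i) \<ge> 0" by linarith
    hence "real (nat (2 * N i + 1)) = 2 * real_of_int (N i) + 1" by simp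
    moreover have e: "h $ i * a / ell = 2 * (h $ i * a / (2 * ell))" by simp
    moreover note \<open>real_of_int (N i) < h $ i * a / (2 * ell) + 1\<close>
    ultimately show "real (nat (2 * N i + 1)) \<le> h $ i * a / ell + 3"
      by (simp only: e)
    show "0 \<le> real (nat (2 * N i + 1))" by simp
  qed
  finally show ?thesis .
qed

lemma Limsup_gt_frequently:
  fixes X :: "real \<Rightarrow> real"
  assumes "ereal c < Limsup at_top (\<lambda>a. ereal (X a))"
  shows "\<exists>\<^sub>F a in at_top. c < X a"
proof -
  from assms have "\<not> (Limsup at_top (\<lambda>a. ereal (X a)) \<le> ereal c)" by simp
  hence "\<not> (\<forall>y>ereal c. eventually (\<lambda>a. y > ereal (X a)) at_top)"
    using Limsup_le_iff[of at_top "\<lambda>a. ereal (X a)" "ereal c"] by blast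
  then obtain y where y: "y > ereal c" "\<not> eventually (\<lambda>a. y > ereal (X a)) at_top" by blast
  hence "\<exists>\<^sub>F a in at_top. y \<le> ereal (X a)" by (simp add: not_eventually not_less)
  thus ?thesis by (rule frequently_elim1) (use y(1) in \<open>metis less_le_trans less_ereal.simps(1)\<close>)
qed

lemma frequently_le_Limsup:
  fixes X :: "real \<Rightarrow> real"
  assumes "\<exists>\<^sub>F a in at_top. k \<le> X a"
  shows "ereal k \<le> Limsup at_top (\<lambda>a. ereal (X a))"
proof (rule ccontr)
  assume "\<not> ereal k \<le> Limsup at_top (\<lambda>a. ereal (X a))"
  hence "ereal k > Limsup at_top (\<lambda>a. ereal (X a))" by simp
  hence "eventually (\<lambda>a. ereal k > ereal (X a)) at_top"
    using Limsup_le_iff[of at_top "\<lambda>a. ereal (X a)" "Limsup at_top (\<lambda>a. ereal (X a))"] by auto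
  hence "eventually (\<lambda>a. \<not> k \<le> X a) at_top" by (rule eventually_mono) auto
  with assms show False by (simp add: frequently_def)
qed

lemma avg_lower:
  fixes S :: "(real^'n) set" and h :: "real^'n"
  assumes s: "\<sigma> > 0" and IC: "IC S" and h: "\<And>i. h $ i > 0" and c: "c > 0"
    and l_def: "ell = 4 * max 1 (1 / c)"
    and a: "a > 0" "\<And>i. a \<ge> 3 * ell / h $ i"
    and M: "real (M_count S h a) / measure lborel (Hmap h ` Cb a) > c"
  shows "(\<Sum>s\<in>S \<inter> Hmap h ` Cb a. err_prob \<sigma> S s) / real (M_count S h a)
           \<ge> kap \<sigma> (real CARD('n) * ell) TYPE('n) / 2"
proof -
  define F where "F = S \<inter> Hmap h ` Cb a"
  define m where "m = real (card F)"
  define P where "P = (\<Prod>i\<in>UNIV. h $ i)"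
  define n where "n = CARD('n)"
  define \<kappa> where "\<kappa> = kap \<sigma> (real CARD('n) * ell) TYPE('n)"
  have lpos: "ell > 0" "ell \<ge> 4" using l_def by auto
  have kpos: "\<kappa> > 0" unfolding \<kappa>_def using lpos s by (intro kap_pos) auto
  have finF: "finite F" using IC window_bounded unfolding F_def IC_def by blast
  have Ppos: "P > 0" unfolding P_def using h by (simp add: prod_pos)
  have vol: "measure lborel (Hmap h ` Cb a) = P * a ^ n" unfolding P_def n_def by (rule vol_window[OF h a(1)])
  have volpos: "P * a ^ n > 0" using Ppos a by simp
  have mgt: "m > c * (P * a ^ n)" using M unfolding vol m_def M_count_def F_def
    using volpos by (simp add: pos_less_divide_eq mult.commute)
  define L where "L = {s\<in>F. \<not> (\<exists>t\<in>F. t \<noteq> s \<and> dist s t \<le> real CARD('n) * ell)}"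
  have sub: "\<And>s i. s \<in> F \<Longrightarrow> \<bar>s $ i\<bar> < h $ i * a / 2"
    unfolding F_def using window_eq[OF h] by blast
  have "real (card L) \<le> (\<Prod>i\<in>UNIV. h $ i * a / ell + 3)"
    unfolding L_def by (rule pigeon[OF finF lpos(1) a(1) h sub])
  also have "\<dots> \<le> (\<Prod>i\<in>UNIV. (2 / ell) * (h $ i * a))"
  proof (rule prod_mono, safe)
    fix i
    have "3 * ell / h $ i \<le> a" by (rule a(2))
    hence "3 * ell \<le> a * h $ i" using h[of i] by (simp add: divide_le_eq)
    hence "3 \<le> h $ i * a / ell" using lpos by (simp add: le_divide_eq mult.commute)
    moreover have "(2 / ell) * (h $ i * a) = 2 * (h $ i * a / ell)" by simp
    ultimately show "h $ i * a / ell + 3 \<le> (2 / ell) * (h $ i * a)" by linarith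
    show "0 \<le> h $ i * a / ell + 3" using h[of i] a lpos by simp
  qed
  also have "\<dots> = (\<Prod>i\<in>(UNIV::'n set). 2 / ell) * ((\<Prod>i\<in>UNIV. h $ i) * (\<Prod>i\<in>(UNIV::'n set). a))"
    by (simp only: prod.distrib)
  also have "\<dots> = (2 / ell) ^ n * (P * a ^ n)"
    by (simp add: P_def n_def)
  also have "\<dots> \<le> (c / 2) * (P * a ^ n)"
  proof (rule mult_right_mono)
    have "(2 / ell) ^ n \<le> (2 / ell) ^ 1"
      using lpos by (intro power_decreasing) (auto simp: n_def Suc_le_eq)
    also have "\<dots> \<le> c / 2"
    proof -
      have "1 / c \<le> max 1 (1 / c)" by simp
      hence "c * (1 / c) \<le> c * max 1 (1 / c)" using c by (intro mult_left_mono) auto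
      hence "1 \<le> c * max 1 (1 / c)" using c by simp
      thus ?thesis using c lpos by (simp add: l_def divide_le_eq field_simps)
    qed
    finally show "(2 / ell) ^ n \<le> c / 2" .
  qed (use volpos in simp)
  finally have cardL: "real (card L) < m / 2" using mgt by linarith
  have LF: "L \<subseteq> F" unfolding L_def by auto
  have errs: "err_prob \<sigma> S s \<ge> \<kappa>" if "s \<in> F - L" for s
  proof -
    from that obtain t where t: "t \<in> F" "t \<noteq> s" "dist s t \<le> real CARD('n) * ell" unfolding L_def by auto
    show ?thesis unfolding \<kappa>_def
      by (rule err_lower[OF s]) (use that t lpos F_def in auto)
  qed
  have "(\<Sum>s\<in>F. err_prob \<sigma> S s) \<ge> (\<Sum>s\<in>F - L. err_prob \<sigma> S s)"
    by (rule sum_mono2[OF finF]) (auto simp: err_prob_def)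
  moreover have "(\<Sum>s\<in>F - L. err_prob \<sigma> S s) \<ge> (\<Sum>s\<in>F - L. \<kappa>)"
    by (rule sum_mono) (rule errs)
  moreover have "(\<Sum>s\<in>F - L. \<kappa>) = \<kappa> * (m - real (card L))"
    using LF finF by (simp add: card_Diff_subset finite_subset m_def card_mono of_nat_diff)
  moreover have "\<kappa> * (m / 2) \<le> \<kappa> * (m - real (card L))"
    using cardL kpos by (intro mult_left_mono) auto
  ultimately have "(\<Sum>s\<in>F. err_prob \<sigma> S s) \<ge> \<kappa> * (m / 2)"
    by linarith
  moreover have mpos: "m > 0" using mgt volpos c by (metis less_trans mult_pos_pos)
  ultimately have "(\<Sum>s\<in>F. err_prob \<sigma> S s) / m \<ge> \<kappa> / 2"
    by (simp add: le_divide_eq)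
  thus ?thesis unfolding F_def m_def \<kappa>_def M_count_def by simp
qed

lemma zero_err_density:
  fixes S :: "(real^'n) set" and h :: "real^'n"
  assumes s: "\<sigma> > 0" and IC: "IC S" and h: "\<And>i. h $ i > 0" and err: "avg_err \<sigma> S h \<le> 0"
  shows "density_rc S h \<le> 0"
proof (rule ccontr)
  assume "\<not> density_rc S h \<le> 0"
  hence "0 < density_rc S h" by simp
  then obtain c where c0: "0 < ereal c" and c1: "ereal c < density_rc S h" using ereal_dense2 by blast
  have c: "c > 0" using c0 by simp
  define ell where "ell = 4 * max 1 (1 / c)"
  define \<kappa> where "\<kappa> = kap \<sigma> (real CARD('n) * ell) TYPE('n)"
  have kpos: "\<kappa> > 0" unfolding \<kappa>_def using s by (intro kap_pos) (auto simp: ell_def)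
  have fr: "\<exists>\<^sub>F a in at_top. c < real (M_count S h a) / measure lborel (Hmap h ` Cb a)"
    using c1 unfolding density_rc_def by (rule Limsup_gt_frequently)
  have ev: "eventually (\<lambda>a. a > 0 \<and> (\<forall>i. 3 * ell / h $ i \<le> a)) at_top"
    by (intro eventually_conj eventually_gt_at_top eventually_all_finite eventually_ge_at_top)
  have "\<exists>\<^sub>F a in at_top. \<kappa> / 2 \<le> (\<Sum>s\<in>S \<inter> Hmap h ` Cb a. err_prob \<sigma> S s) / real (M_count S h a)"
    using frequently_eventually_frequently[OF fr ev]
  proof (rule frequently_elim1)
    fix a assume a: "c < real (M_count S h a) / measure lborel (Hmap h ` Cb a) \<and> 0 < a \<and> (\<forall>i. 3 * ell / h $ i \<le> a)"
    show "\<kappa> / 2 \<le> (\<Sum>s\<in>S \<inter> Hmap h ` Cb a. err_prob \<sigma> S s) / real (M_count S h a)"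
      unfolding \<kappa>_def using a by (intro avg_lower[OF s IC h c ell_def]) auto
  qed
  hence "ereal (\<kappa> / 2) \<le> avg_err \<sigma> S h"
    unfolding avg_err_def by (rule frequently_le_Limsup)
  with err kpos show False by (metis ereal_less_eq(3) half_gt_zero leD order_trans zero_ereal_def)
qed

definition Lat :: "real \<Rightarrow> (real^'n) set" where
  "Lat D = {x. \<forall>i. \<exists>k::int. x $ i = D * of_int k}"

lemma Lat_countable: "countable (Lat D :: (real^'n) set)"
proof -
  have "Lat D \<subseteq> range (\<lambda>k::'n \<Rightarrow> int. \<chi> i. D * of_int (k i))"
  proof
    fix x :: "real^'n" assume "x \<in> Lat D"
    hence "\<forall>i. \<exists>k::int. x $ i = D * of_int k" by (simp add: Lat_def)
    then obtain k where "\<forall>i. x $ i = D * of_int (k i)" by metis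
    hence "x = (\<chi> i. D * of_int (k i))" by (simp add: vec_eq_iff)
    thus "x \<in> range (\<lambda>k::'n \<Rightarrow> int. \<chi> i. D * of_int (k i))" by blast
  qed
  moreover have "countable (range (\<lambda>k::'n \<Rightarrow> int. \<chi> i. D * of_int (k i)))" by simp
  ultimately show ?thesis by (rule countable_subset)
qed

lemma Lat_finite:
  assumes D: "D > 0" and B: "bounded B"
  shows "finite (Lat D \<inter> (B :: (real^'n) set))"
proof -
  obtain R where R: "\<And>x. x \<in> B \<Longrightarrow> norm x \<le> R" using B by (auto simp: bounded_iff)
  define N where "N = \<lceil>R / D\<rceil>"
  have "Lat D \<inter> B \<subseteq> (\<lambda>k::'n \<Rightarrow> int. \<chi> i. D * of_int (k i)) ` PiE UNIV (\<lambda>_. {-N..N})"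
  proof
    fix x :: "real^'n" assume x: "x \<in> Lat D \<inter> B"
    hence "\<forall>i. \<exists>k::int. x $ i = D * of_int k" by (simp add: Lat_def)
    then obtain k where k: "\<forall>i. x $ i = D * of_int (k i)" by metis
    have "k i \<in> {-N..N}" for i
    proof -
      have "\<bar>x $ i\<bar> \<le> R" using component_le_norm_cart[of x i] R[of x] x by simp
      hence "D * \<bar>of_int (k i)\<bar> \<le> R" using k D by (simp add: abs_mult)
      hence "\<bar>of_int (k i)\<bar> \<le> R / D" using D by (simp add: le_divide_eq mult.commute)
      moreover have "R / D \<le> of_int N" unfolding N_def by (rule le_of_int_ceiling)
      ultimately have "\<bar>real_of_int (k i)\<bar> \<le> real_of_int N" by linarith
      hence "\<bar>k i\<bar> \<le> N" by (simp only: of_int_abs[symmetric] of_int_le_iff)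
      thus ?thesis by (simp add: abs_le_iff)
    qed
    hence "k \<in> PiE UNIV (\<lambda>_. {-N..N})" by auto
    moreover have "x = (\<chi> i. D * of_int (k i))" using k by (simp add: vec_eq_iff)
    ultimately show "x \<in> (\<lambda>k::'n \<Rightarrow> int. \<chi> i. D * of_int (k i)) ` PiE UNIV (\<lambda>_. {-N..N})" by blast
  qed
  moreover have "finite ((\<lambda>k::'n \<Rightarrow> int. \<chi> i. D * of_int (k i)) ` PiE UNIV (\<lambda>_. {-N..N}))"
    by (intro finite_imageI finite_PiE) auto
  ultimately show ?thesis by (rule finite_subset)
qed

lemma Lat_round:
  fixes x :: "real^'n"
  assumes D: "D > 0"
  shows "\<exists>p\<in>Lat D. dist x p \<le> real CARD('n) * (D / 2)"
proof -
  define p :: "real^'n" where "p = (\<chi> i. D * of_int \<lfloor>x $ i / D + 1/2\<rfloor>)"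
  have "p \<in> Lat D" unfolding p_def Lat_def by auto
  moreover have "\<bar>(x - p) $ i\<bar> \<le> D / 2" for i
  proof -
    have a: "of_int \<lfloor>x $ i / D + 1/2\<rfloor> \<le> x $ i / D + 1/2" by (rule of_int_floor_le)
    have b: "x $ i / D + 1/2 < of_int \<lfloor>x $ i / D + 1/2\<rfloor> + 1" by (rule real_of_int_floor_add_one_gt)
    have "\<bar>x $ i / D - of_int \<lfloor>x $ i / D + 1/2\<rfloor>\<bar> \<le> 1/2" using a b by (simp only: abs_le_iff) linarith
    hence "D * \<bar>x $ i / D - of_int \<lfloor>x $ i / D + 1/2\<rfloor>\<bar> \<le> D * (1/2)" using D by (intro mult_left_mono) auto
    moreover have "D * \<bar>x $ i / D - of_int \<lfloor>x $ i / D + 1/2\<rfloor>\<bar> = \<bar>D * (x $ i / D - of_int \<lfloor>x $ i / D + 1/2\<rfloor>)\<bar>"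
      using D by (simp add: abs_mult)
    moreover have "D * (x $ i / D - of_int \<lfloor>x $ i / D + 1/2\<rfloor>) = x $ i - D * of_int \<lfloor>x $ i / D + 1/2\<rfloor>"
      using D by (simp add: right_diff_distrib)
    ultimately show ?thesis by (simp add: p_def)
  qed
  hence "norm (x - p) \<le> real CARD('n) * (D / 2)" by (rule l1_sum_le)
  ultimately show ?thesis by (auto simp: dist_norm)
qed

lemma Lat_sep:
  assumes D: "D > 0" and p: "p \<in> Lat D" and q: "q \<in> Lat D" and pq: "p \<noteq> (q :: real^'n)"
  shows "D \<le> dist p q"
proof -
  obtain i where i: "p $ i \<noteq> q $ i" using pq by (auto simp: vec_eq_iff)
  obtain k k' :: int where k: "p $ i = D * of_int k" "q $ i = D * of_int k'"
    using p q unfolding Lat_def by blast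
  have "k \<noteq> k'" using i k by auto
  hence "1 \<le> \<bar>real_of_int (k - k')\<bar>" by (simp only: of_int_abs[symmetric])
  hence "D * 1 \<le> D * \<bar>real_of_int (k - k')\<bar>" using D by (intro mult_left_mono) auto
  also have "\<dots> = \<bar>D * real_of_int (k - k')\<bar>" using D by (simp add: abs_mult)
  also have "\<dots> = \<bar>(p - q) $ i\<bar>" using k by (simp add: right_diff_distrib)
  also have "\<dots> \<le> norm (p - q)" by (rule component_le_norm_cart)
  finally show ?thesis by (simp add: dist_norm)
qed

definition addpts :: "real \<Rightarrow> (real^'n) set \<Rightarrow> (real^'n) set" where
  "addpts D S = {p \<in> Lat D. \<forall>s\<in>S. D \<le> dist p s}"

lemma T_IC:
  fixes S :: "(real^'n) set"
  assumes IC: "IC S" and D: "D > 0"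
  shows "IC (S \<union> addpts D S)"
  unfolding IC_def
proof safe
  show "countable (S \<union> addpts D S)"
    using IC Lat_countable[of D] unfolding IC_def addpts_def
    by (metis (no_types, lifting) countable_Un countable_subset mem_Collect_eq subsetI)
next
  fix B :: "(real^'n) set" assume B: "bounded B"
  have "finite (S \<inter> B)" using IC B by (simp add: IC_def)
  moreover have "finite (Lat D \<inter> B)" by (rule Lat_finite[OF D B])
  moreover have "(S \<union> addpts D S) \<inter> B \<subseteq> (S \<inter> B) \<union> (Lat D \<inter> B)" by (auto simp: addpts_def)
  ultimately show "finite ((S \<union> addpts D S) \<inter> B)" by (meson finite_Un finite_subset)
qed

lemma T_regular:
  assumes D: "D > 0"
  shows "regular_IC (S \<union> addpts D (S :: (real^'n) set))"
  unfolding regular_IC_def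
proof (intro exI[of _ "real CARD('n) * (D / 2) + D + 1"] conjI ballI subsetI)
  have "0 \<le> real CARD('n) * (D / 2)" using D by simp
  thus "real CARD('n) * (D / 2) + D + 1 > 0" using D by linarith
next
  fix s x assume s: "s \<in> S \<union> addpts D S" and x: "x \<in> voronoi (S \<union> addpts D S) s"
  obtain p where p: "p \<in> Lat D" "dist x p \<le> real CARD('n) * (D / 2)" using Lat_round[OF D, of x] by blast
  have "dist x s < real CARD('n) * (D / 2) + D + 1"
  proof (cases "p \<in> addpts D S")
    case True
    hence "dist x s \<le> dist x p" using x by (auto simp: voronoi_def)
    thus ?thesis using p D by linarith
  next
    case False
    then obtain s' where s': "s' \<in> S" "dist p s' < D" using p(1) by (auto simp: addpts_def not_le)
    hence "dist x s \<le> dist x s'" using x by (auto simp: voronoi_def)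
    also have "\<dots> \<le> dist x p + dist p s'" by (rule dist_triangle)
    finally show ?thesis using p s' by linarith
  qed
  thus "x \<in> ball s (real CARD('n) * (D / 2) + D + 1)" by (simp add: dist_commute)
qed

lemma err_T_S:
  fixes S :: "(real^'n) set"
  assumes D: "D > 0" and s: "s \<in> S"
  shows "{z. s + z \<notin> voronoi (S \<union> addpts D S) s} \<subseteq> {z. s + z \<notin> voronoi S s} \<union> {z. D / 2 \<le> norm (z :: real^'n)}"
proof
  fix z assume "z \<in> {z. s + z \<notin> voronoi (S \<union> addpts D S) s}"
  then obtain t where t: "t \<in> S \<union> addpts D S" "\<not> dist (s + z) s \<le> dist (s + z) t"
    by (auto simp: voronoi_def)
  show "z \<in> {z. s + z \<notin> voronoi S s} \<union> {z. D / 2 \<le> norm z}"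
  proof (cases "t \<in> S")
    case True thus ?thesis using t by (auto simp: voronoi_def)
  next
    case False
    hence "D \<le> dist t s" using t s by (auto simp: addpts_def)
    moreover have "dist t s \<le> dist t (s + z) + dist (s + z) s" by (rule dist_triangle)
    moreover have "dist (s + z) s = norm z" by (simp add: dist_norm)
    ultimately have "D \<le> 2 * norm z" using t(2) by (simp add: dist_commute)
    thus ?thesis by simp
  qed
qed

lemma err_T_A:
  fixes S :: "(real^'n) set"
  assumes D: "D > 0" and p: "p \<in> addpts D S"
  shows "{z. p + z \<notin> voronoi (S \<union> addpts D S) p} \<subseteq> {z. D / 2 \<le> norm (z :: real^'n)}"
proof
  fix z assume "z \<in> {z. p + z \<notin> voronoi (S \<union> addpts D S) p}"
  then obtain t where t: "t \<in> S \<union> addpts D S" "\<not> dist (p + z) p \<le> dist (p + z) t"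
    by (auto simp: voronoi_def)
  have tp: "t \<noteq> p" using t(2) by auto
  have "D \<le> dist p t"
  proof (cases "t \<in> S")
    case True thus ?thesis using p by (auto simp: addpts_def)
  next
    case False
    hence "t \<in> addpts D S" using t by auto
    thus ?thesis using Lat_sep[OF D _ _ tp[symmetric]] p by (auto simp: addpts_def)
  qed
  moreover have "dist p t \<le> dist p (p + z) + dist (p + z) t" by (rule dist_triangle)
  moreover have "dist (p + z) p = norm z" by (simp add: dist_norm)
  ultimately have "D \<le> 2 * norm z" using t(2) by (simp add: dist_commute)
  thus "z \<in> {z. D / 2 \<le> norm z}" by simp
qed

lemma tail_sets: "{z. c \<le> norm (z :: real^'n)} \<in> sets borel"
  by (intro borel_closed closed_Collect_le) (auto intro: continuous_intros)

lemma errp_T_S: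
  fixes S :: "(real^'n) set"
  assumes sg: "\<sigma> > 0" and D: "D > 0" and s: "s \<in> S"
  shows "err_prob \<sigma> (S \<union> addpts D S) s \<le> err_prob \<sigma> S s + measure (gauss_noise \<sigma>) {z. D / 2 \<le> norm (z :: real^'n)}"
proof -
  interpret finite_measure "gauss_noise \<sigma> :: (real^'n) measure" by (rule gauss_noise_finite[OF sg])
  have "err_prob \<sigma> (S \<union> addpts D S) s \<le> measure (gauss_noise \<sigma>) ({z. s + z \<notin> voronoi S s} \<union> {z. D / 2 \<le> norm (z :: real^'n)})"
    unfolding err_prob_def
    by (rule finite_measure_mono[OF err_T_S[OF D s]]) (simp only: sets_gauss sets.Un err_set_sets tail_sets)
  also have "\<dots> \<le> err_prob \<sigma> S s + measure (gauss_noise \<sigma>) {z. D / 2 \<le> norm (z :: real^'n)}"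
    unfolding err_prob_def by (rule measure_Un_le) (simp_all only: sets_gauss err_set_sets tail_sets)
  finally show ?thesis .
qed

lemma errp_T_A:
  fixes S :: "(real^'n) set"
  assumes sg: "\<sigma> > 0" and D: "D > 0" and p: "p \<in> addpts D S"
  shows "err_prob \<sigma> (S \<union> addpts D S) p \<le> measure (gauss_noise \<sigma>) {z. D / 2 \<le> norm (z :: real^'n)}"
proof -
  interpret finite_measure "gauss_noise \<sigma> :: (real^'n) measure" by (rule gauss_noise_finite[OF sg])
  show ?thesis unfolding err_prob_def
    by (rule finite_measure_mono[OF err_T_A[OF D p]]) (simp only: sets_gauss tail_sets)
qed

lemma err_nonneg: "0 \<le> err_prob \<sigma> S s" by (simp add: err_prob_def)

lemma window_avg:
  fixes S :: "(real^'n) set" and h :: "real^'n"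
  assumes sg: "\<sigma> > 0" and D: "D > 0" and IC: "IC S"
  defines "T \<equiv> S \<union> addpts D S"
  defines "\<eta> \<equiv> measure (gauss_noise \<sigma>) {z. D / 2 \<le> norm (z :: real^'n)}"
  shows "(\<Sum>s\<in>T \<inter> Hmap h ` Cb a. err_prob \<sigma> T s) / real (M_count T h a)
     \<le> (\<Sum>s\<in>S \<inter> Hmap h ` Cb a. err_prob \<sigma> S s) / real (M_count S h a) + \<eta>"
proof -
  define W where "W = Hmap h ` Cb a"
  have Wb: "bounded W" unfolding W_def by (rule window_bounded)
  define F1 where "F1 = S \<inter> W"
  define F2 where "F2 = addpts D S \<inter> W"
  have ICT: "IC T" unfolding T_def by (rule T_IC[OF IC D])
  have fin1: "finite F1" using IC Wb unfolding F1_def IC_def by blast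
  have fin2: "finite F2"
  proof -
    have "finite (T \<inter> W)" using ICT Wb unfolding IC_def by blast
    moreover have "F2 \<subseteq> T \<inter> W" unfolding F2_def T_def by auto
    ultimately show ?thesis using finite_subset by blast
  qed
  have disj: "F1 \<inter> F2 = {}" using D unfolding F1_def F2_def addpts_def by force
  have TW: "T \<inter> W = F1 \<union> F2" unfolding T_def F1_def F2_def by auto
  define m1 where "m1 = real (card F1)"
  define m2 where "m2 = real (card F2)"
  define E where "E = (\<Sum>s\<in>F1. err_prob \<sigma> S s)"
  have E0: "E \<ge> 0" unfolding E_def by (intro sum_nonneg) (simp add: err_nonneg)
  have eta0: "\<eta> \<ge> 0" unfolding \<eta>_def by simp
  have cardT: "real (M_count T h a) = m1 + m2"
    unfolding M_count_def W_def[symmetric] TW m1_def m2_def using fin1 fin2 disj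
    by (simp add: card_Un_disjoint)
  have cardS: "real (M_count S h a) = m1" unfolding M_count_def W_def[symmetric] F1_def m1_def ..
  have "(\<Sum>s\<in>T \<inter> W. err_prob \<sigma> T s) = (\<Sum>s\<in>F1. err_prob \<sigma> T s) + (\<Sum>s\<in>F2. err_prob \<sigma> T s)"
    unfolding TW using fin1 fin2 disj by (rule sum.union_disjoint)
  also have "\<dots> \<le> (\<Sum>s\<in>F1. err_prob \<sigma> S s + \<eta>) + (\<Sum>s\<in>F2. \<eta>)"
  proof (rule add_mono)
    show "(\<Sum>s\<in>F1. err_prob \<sigma> T s) \<le> (\<Sum>s\<in>F1. err_prob \<sigma> S s + \<eta>)"
      unfolding T_def \<eta>_def by (intro sum_mono errp_T_S[OF sg D]) (auto simp: F1_def)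
    show "(\<Sum>s\<in>F2. err_prob \<sigma> T s) \<le> (\<Sum>s\<in>F2. \<eta>)"
      unfolding T_def \<eta>_def by (intro sum_mono errp_T_A[OF sg D]) (auto simp: F2_def)
  qed
  also have "\<dots> = E + (m1 + m2) * \<eta>"
    by (simp add: sum.distrib E_def m1_def m2_def algebra_simps)
  finally have sumT: "(\<Sum>s\<in>T \<inter> W. err_prob \<sigma> T s) \<le> E + (m1 + m2) * \<eta>" .
  have m0: "m1 \<ge> 0" "m2 \<ge> 0" by (simp_all add: m1_def m2_def)
  have key: "(\<Sum>s\<in>T \<inter> W. err_prob \<sigma> T s) / (m1 + m2) \<le> E / m1 + \<eta>"
  proof (cases "m1 + m2 = 0")
    case True
    thus ?thesis using E0 eta0 m0 by simp
  next
    case False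
    hence pos: "m1 + m2 > 0" using m0 by linarith
    have "(\<Sum>s\<in>T \<inter> W. err_prob \<sigma> T s) / (m1 + m2) \<le> (E + (m1 + m2) * \<eta>) / (m1 + m2)"
      using sumT pos by (intro divide_right_mono) auto
    also have "\<dots> = E / (m1 + m2) + \<eta>" using pos by (simp add: add_divide_distrib)
    also have "E / (m1 + m2) \<le> E / m1"
    proof (cases "m1 = 0")
      case True
      hence "F1 = {}" using fin1 by (simp add: m1_def)
      hence "E = 0" by (simp add: E_def)
      thus ?thesis by simp
    next
      case False
      hence "m1 > 0" using m0 by linarith
      thus ?thesis using E0 m0 by (intro divide_left_mono) auto
    qed
    hence "E / (m1 + m2) + \<eta> \<le> E / m1 + \<eta>" by simp
    finally show ?thesis .
  qed
  thus ?thesis unfolding cardT cardS W_def[symmetric] E_def F1_def .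
qed

lemma avg_err_T:
  fixes S :: "(real^'n) set" and h :: "real^'n"
  assumes sg: "\<sigma> > 0" and D: "D > 0" and IC: "IC S"
  shows "avg_err \<sigma> (S \<union> addpts D S) h
     \<le> avg_err \<sigma> S h + ereal (measure (gauss_noise \<sigma>) {z. D / 2 \<le> norm (z :: real^'n)})"
proof -
  let ?\<eta> = "measure (gauss_noise \<sigma>) {z. D / 2 \<le> norm (z :: real^'n)}"
  have "avg_err \<sigma> (S \<union> addpts D S) h \<le>
      Limsup at_top (\<lambda>a. ereal ((\<Sum>s\<in>S \<inter> Hmap h ` Cb a. err_prob \<sigma> S s) / real (M_count S h a)) + ereal ?\<eta>)"
    unfolding avg_err_def
    by (intro Limsup_mono always_eventually allI) (simp only: plus_ereal.simps ereal_less_eq(3) window_avg[OF sg D IC])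
  also have "\<dots> = avg_err \<sigma> S h + ereal ?\<eta>"
    unfolding avg_err_def by (rule Limsup_add_ereal_right) auto
  finally show ?thesis .
qed

lemma density_T:
  fixes S :: "(real^'n) set" and h :: "real^'n"
  assumes D: "D > 0" and IC: "IC S"
  shows "density_rc S h \<le> density_rc (S \<union> addpts D S) h"
  unfolding density_rc_def
proof (intro Limsup_mono always_eventually allI)
  fix a
  have "finite ((S \<union> addpts D S) \<inter> Hmap h ` Cb a)"
    using T_IC[OF IC D] window_bounded unfolding IC_def by blast
  hence "M_count S h a \<le> M_count (S \<union> addpts D S) h a"
    unfolding M_count_def by (rule card_mono) auto
  thus "ereal (real (M_count S h a) / measure lborel (Hmap h ` Cb a))
      \<le> ereal (real (M_count (S \<union> addpts D S) h a) / measure lborel (Hmap h ` Cb a))"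
    by (simp add: divide_right_mono)
qed

lemma fading_prob:
  assumes "regular_fading_pdf f"
  shows "prob_space (density lborel (\<lambda>x. ennreal (f x)))"
  using assms unfolding regular_fading_pdf_def
  by (intro prob_spaceI) (auto simp: emeasure_density_const emeasure_density)

lemma hstar_nonneg:
  assumes rf: "regular_fading_pdf f" and xi: "\<xi> > 0" and hs: "is_hstar f TYPE('n::finite) \<xi> t"
  shows "0 \<le> t"
proof (rule ccontr)
  assume "\<not> 0 \<le> t" hence t: "t < 0" by simp
  define M where "M = density lborel (\<lambda>x. ennreal (f x))"
  have fm[measurable]: "f \<in> borel_measurable borel" and f0: "\<And>x. x \<le> 0 \<Longrightarrow> f x = 0"
    using rf unfolding regular_fading_pdf_def by auto
  interpret product_prob_space "\<lambda>_::'n. M" UNIV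
    by (rule product_prob_spaceI) (use fading_prob[OF rf] M_def in auto)
  let ?P = "Pi\<^sub>M (UNIV::'n set) (\<lambda>_. M)"
  have sp: "space ?P = UNIV" by (simp add: space_PiM M_def)
  have null: "emeasure ?P {x\<in>space ?P. x i \<in> {..0}} = 0" for i
  proof -
    have "emeasure ?P {x\<in>space ?P. x i \<in> {..0}} = emeasure M {..0}"
      by (rule emeasure_PiM_Collect_single) (auto simp: M_def)
    also have "\<dots> = (\<integral>\<^sup>+ x. ennreal (f x) * indicator {..0} x \<partial>lborel)"
      by (simp add: M_def emeasure_density)
    also have "\<dots> = 0"
      by (rule nn_integral_0_iff_AE[THEN iffD2]) (auto simp: f0 indicator_def)
    finally show ?thesis .
  qed
  have sets: "{x\<in>space ?P. x i \<in> {..0}} \<in> sets ?P" for i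
    unfolding M_def by measurable
  have "(\<Union>i. {x\<in>space ?P. x i \<in> {..0}}) \<in> null_sets ?P"
    using null sets by (intro null_sets_UN') (auto simp: null_sets_def)
  moreover have "{H. Min (range H) \<le> t} \<subseteq> (\<Union>i. {x\<in>space ?P. x i \<in> {..0}})"
  proof
    fix H :: "'n \<Rightarrow> real" assume "H \<in> {H. Min (range H) \<le> t}"
    then obtain i where "H i \<le> t"
      by (metis (mono_tags, lifting) Min_in UNIV_I empty_not_UNIV finite finite_imageI image_iff image_is_empty mem_Collect_eq)
    then show "H \<in> (\<Union>i. {x\<in>space ?P. x i \<in> {..0}})" using t sp by (auto intro!: exI[of _ i])
  qed
  ultimately have "emeasure ?P {H. Min (range H) \<le> t} = 0"
    by (metis (no_types, lifting) emeasure_mono le_zero_eq null_setsD1 null_setsD2)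
  hence "measure ?P {H. Min (range H) \<le> t} = 0" by (simp add: measure_def)
  with hs xi show False unfolding is_hstar_def fading_law_def M_def by simp
qed

lemma density_nonneg: "0 \<le> density_rc S h"
proof -
  have "\<exists>\<^sub>F a in at_top. 0 \<le> real (M_count S h a) / measure lborel (Hmap h ` Cb a)"
    by (intro eventually_frequently always_eventually allI) auto
  thus ?thesis unfolding density_rc_def using frequently_le_Limsup by (metis zero_ereal_def)
qed

lemma avg_err_nonneg: "0 \<le> avg_err \<sigma> S h"
proof -
  have "\<exists>\<^sub>F a in at_top. 0 \<le> (\<Sum>s\<in>S \<inter> Hmap h ` Cb a. err_prob \<sigma> S s) / real (M_count S h a)"
    by (intro eventually_frequently always_eventually allI divide_nonneg_nonneg sum_nonneg err_nonneg) auto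
  thus ?thesis unfolding avg_err_def using frequently_le_Limsup by (metis zero_ereal_def)
qed

lemma density_empty: "density_rc {} h = 0"
  unfolding density_rc_def M_count_def by (simp add: Limsup_const zero_ereal_def[symmetric])

lemma avg_err_empty: "avg_err \<sigma> {} h = 0"
  unfolding avg_err_def M_count_def by (simp add: Limsup_const zero_ereal_def[symmetric])

lemma ereal_div_le: "0 \<le> x \<Longrightarrow> \<xi> > 0 \<Longrightarrow> x / ereal (1 + \<xi>) \<le> (x :: ereal)"
proof (cases x)
  case (real r)
  assume "0 \<le> x" "\<xi> > 0"
  hence "r \<ge> 0" using real by simp
  hence "r * 1 \<le> r * (1 + \<xi>)" using \<open>\<xi> > 0\<close> by (intro mult_left_mono) auto
  hence "r / (1 + \<xi>) \<le> r" using \<open>\<xi> > 0\<close> by (simp add: divide_le_eq)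
  thus ?thesis using real \<open>\<xi> > 0\<close> by simp
qed auto

theorem lemma4p2:
  fixes f :: "real \<Rightarrow> real" and \<sigma> \<xi> hstar :: real
    and S :: "(real^'n) set" and h :: "real^'n"
  assumes "regular_fading_pdf f"
    and "\<sigma> > 0"
    and "IC S"
    and "\<xi> > 0"
    and "is_hstar f TYPE('n) \<xi> hstar"
    and "\<not> xi_strong hstar h"
  shows "\<exists>T. IC T \<and> regular_IC T \<and>
           density_rc T h \<ge> density_rc (Hmap h ` S) h / ereal (1 + \<xi>) \<and>
           avg_err \<sigma> T h \<le> avg_err \<sigma> (Hmap h ` S) h * ereal (1 + \<xi>)"
proof -
  note rf = assms(1) and sg = assms(2) and ICS = assms(3) and xi = assms(4)
  have hs0: "0 \<le> hstar" by (rule hstar_nonneg[OF rf xi assms(5)])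
  have hpos: "h $ i > 0" for i
  proof -
    have "hstar < hmin h" using assms(6) by (simp add: xi_strong_def)
    also have "hmin h \<le> h $ i" unfolding hmin_def by (intro Min_le) auto
    finally show ?thesis using hs0 by linarith
  qed
  have hn: "h $ i \<noteq> 0" for i using hpos[of i] by simp
  define S' where "S' = Hmap h ` S"
  have IC': "IC S'" unfolding S'_def by (rule IC_image[OF ICS hn])
  define \<epsilon> where "\<epsilon> = avg_err \<sigma> S' h"
  define \<gamma> where "\<gamma> = density_rc S' h"
  have e0: "\<epsilon> \<ge> 0" unfolding \<epsilon>_def by (rule avg_err_nonneg)
  have g0: "\<gamma> \<ge> 0" unfolding \<gamma>_def by (rule density_nonneg)
  show ?thesis unfolding S'_def[symmetric] \<epsilon>_def[symmetric] \<gamma>_def[symmetric]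
  proof (cases "\<epsilon> \<le> 0")
    case True
    have "\<gamma> \<le> 0" unfolding \<gamma>_def using True unfolding \<epsilon>_def
      by (intro zero_err_density[OF sg IC' hpos])
    hence "\<gamma> = 0" using g0 by simp
    moreover have "\<epsilon> = 0" using True e0 by simp
    moreover have "IC ({} :: (real^'n) set)" by (simp add: IC_def)
    moreover have "regular_IC ({} :: (real^'n) set)" by (auto simp: regular_IC_def intro: exI[of _ 1])
    ultimately show "\<exists>T. IC T \<and> regular_IC T \<and> \<gamma> / ereal (1 + \<xi>) \<le> density_rc T h \<and> avg_err \<sigma> T h \<le> \<epsilon> * ereal (1 + \<xi>)"
      by (intro exI[of _ "{}"]) (simp add: density_empty avg_err_empty)
  next
    case False
    hence epos: "\<epsilon> > 0" by simp
    define e where "e = (if \<epsilon> = \<infinity> then 1 else real_of_ereal \<epsilon> * \<xi>)"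
    have epos': "e > 0"
    proof (cases "\<epsilon> = \<infinity>")
      case False
      then obtain r where r: "\<epsilon> = ereal r" using epos by (cases \<epsilon>) auto
      thus ?thesis using epos xi False by (simp add: e_def)
    qed (simp add: e_def)
    obtain D0 where D0: "D0 > 0" "measure (gauss_noise \<sigma>) {z. D0 \<le> norm (z :: real^'n)} \<le> e"
      using gauss_tail[OF sg epos'] by blast
    define D where "D = 2 * D0"
    have D: "D > 0" using D0 by (simp add: D_def)
    define \<eta> where "\<eta> = measure (gauss_noise \<sigma>) {z. D / 2 \<le> norm (z :: real^'n)}"
    have eta: "\<eta> \<le> e" using D0 by (simp add: \<eta>_def D_def)
    define T where "T = S' \<union> addpts D S'"
    have "IC T" unfolding T_def by (rule T_IC[OF IC' D])
    moreover have "regular_IC T" unfolding T_def by (rule T_regular[OF D])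
    moreover have "\<gamma> / ereal (1 + \<xi>) \<le> density_rc T h"
    proof -
      have "\<gamma> / ereal (1 + \<xi>) \<le> \<gamma>" by (rule ereal_div_le[OF g0 xi])
      also have "\<gamma> \<le> density_rc T h" unfolding \<gamma>_def T_def by (rule density_T[OF D IC'])
      finally show ?thesis .
    qed
    moreover have "avg_err \<sigma> T h \<le> \<epsilon> * ereal (1 + \<xi>)"
    proof (cases "\<epsilon> = \<infinity>")
      case True
      thus ?thesis using xi by simp
    next
      case False
      then obtain r where r: "\<epsilon> = ereal r" using epos by (cases \<epsilon>) auto
      have "avg_err \<sigma> T h \<le> \<epsilon> + ereal \<eta>"
        unfolding T_def \<epsilon>_def \<eta>_def by (rule avg_err_T[OF sg D IC'])
      also have "\<dots> \<le> \<epsilon> * ereal (1 + \<xi>)"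
        using eta False r by (simp add: e_def algebra_simps)
      finally show ?thesis .
    qed
    ultimately show "\<exists>T. IC T \<and> regular_IC T \<and> \<gamma> / ereal (1 + \<xi>) \<le> density_rc T h \<and> avg_err \<sigma> T h \<le> \<epsilon> * ereal (1 + \<xi>)"
      by blast
  qed
qed

end
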